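(* Let $N, M$ be positive integers, let $\mathbf{a} \in \mathbb{C}^{N}$ and $\mathbf{B} \in \mathbb{C}^{N \times M}$ be constants. For diagonal matrices $\mathbf{Z}_1,\mathbf{Z}_2 \in \mathbb{C}^{N\times N}$ and vectors $\mathbf{z}_3,\mathbf{z}_4 \in \mathbb{C}^M$ define \[ \begin{aligned} \Lambda_{\mathbf{a},\mathbf{B}}(\mathbf{Z}_1,\mathbf{Z}_2,\mathbf{z}_3,\mathbf{z}_4) \triangleq\ & \tfrac14\big\|\mathrm{diag}(\mathbf{Z}_1^* ) + \mathrm{diag}(\mathbf{a})\mathbf{B}\mathbf{z}_3\big\|_2^2 \\ & - \tfrac12\Re\Big\{\big(\mathrm{diag}(\mathbf{Z}_2^* ) - \mathrm{diag}(\mathbf{a})\mathbf{B}\mathbf{z}_4\big)^{\mathsf H}\big(\mathrm{diag}(\mathbf{Z}_1^* ) - \mathrm{diag}(\mathbf{a})\mathbf{B}\mathbf{z}_3\big)\Big\} \\ & + \tfrac14\big\|\mathrm{diag}(\mathbf{Z}_2^* ) - \mathrm{diag}(\mathbf{a})\mathbf{B}\mathbf{z}_4\big\|_2^2 . \end{aligned} \] Fix a diagonal matrix $\mathbf{X}_0 \in \mathbb{C}^{N\times N}$ and a vector $\mathbf{y}_0 \in \mathbb{C}^M$. Let $\mathbf{X} \in \mathbb{C}^{N\times N}$ be diagonal, $\mathbf{y} \in \mathbb{C}^M$, and let $\rho,\kappa \in \mathbb{R}$ satisfy \[ \rho \ge \Lambda_{\mathbf{a},\mathbf{B}}(\mathbf{X},\mathbf{X}_0,\mathbf{y},\mathbf{y}_0),\quad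 \rho \ge \Lambda_{\mathbf{a},\mathbf{B}}(\mathbf{X},\mathbf{X}_0,-\mathbf{y},-\mathbf{y}_0), \] \[ \kappa \ge \Lambda_{\mathbf{a},\mathbf{B}}(\mathbf{X},\mathbf{X}_0,j\mathbf{y},j\mathbf{y}_0),\quad \kappa \ge \Lambda_{\mathbf{a},\mathbf{B}}(\mathbf{X},\mathbf{X}_0,-j\mathbf{y},-j\mathbf{y}_0). \] Then \[ |\mathbf{a}^{\mathsf T}\mathbf{X}\mathbf{B}\mathbf{y}|^2 \le \rho^2 + \kappa^2 . \] Moreover, each of the four functions $(\mathbf{X},\mathbf{y}) \mapsto \Lambda_{\mathbf{a},\mathbf{B}}(\mathbf{X},\mathbf{X}_0,\pm\mathbf{y},\pm\mathbf{y}_0)$, $(\mathbf{X},\mathbf{y}) \mapsto \Lambda_{\mathbf{a},\mathbf{B}}(\mathbf{X},\mathbf{X}_0,\pm j\mathbf{y},\pm j\mathbf{y}_0)$ is jointly convex in $(\mathbf{X},\mathbf{y})$ (as a real-valued function of the real and imaginary parts of the diagonal entries of $\mathbf{X}$ and the entries of $\mathbf{y}$), so the upper bound $\rho^2+\kappa^2$ together with these constraints is convex.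
   Context: $j=\sqrt{-1}$. $(\cdot)^*$ denotes entrywise complex conjugation, $(\cdot)^{\mathsf T}$ transpose, $(\cdot)^{\mathsf H}$ conjugate transpose, $\|\cdot\|_2$ the Euclidean norm, $\Re\{\cdot\}$ the real part, $|\cdot|$ the modulus. For a vector $\mathbf{v}$, $\mathrm{diag}(\mathbf{v})$ is the diagonal matrix with $\mathbf{v}$ on its diagonal; for a diagonal matrix $\mathbf{Z}$, $\mathrm{diag}(\mathbf{Z})$ is the vector of its diagonal entries, and $\mathrm{diag}(\mathbf{Z}^* )$ is the entrywise conjugate of that vector. *)

theory Defs
  imports "HOL-Analysis.Analysis"
begin

definition is_diag :: "complex ^ 'n ^ 'n \<Rightarrow> bool" where
  "is_diag Z \<longleftrightarrow> (\<forall>i j. i \<noteq> j \<longrightarrow> Z $ i $ j = 0)"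

definition diag_conj :: "complex ^ 'n ^ 'n \<Rightarrow> complex ^ 'n" where
  "diag_conj Z = (\<chi> i. cnj (Z $ i $ i))"

definition diagB :: "complex ^ 'n \<Rightarrow> complex ^ 'm ^ 'n \<Rightarrow> complex ^ 'm \<Rightarrow> complex ^ 'n" where
  "diagB a B z = (\<chi> i. a $ i * (B *v z) $ i)"

definition herm_inner :: "complex ^ 'n \<Rightarrow> complex ^ 'n \<Rightarrow> complex" where
  "herm_inner u v = (\<Sum>i\<in>UNIV. cnj (u $ i) * v $ i)"

definition Lambda ::
  "complex ^ 'n \<Rightarrow> complex ^ 'm ^ 'n \<Rightarrow> complex ^ 'n ^ 'n \<Rightarrow> complex ^ 'n ^ 'n
     \<Rightarrow> complex ^ 'm \<Rightarrow> complex ^ 'm \<Rightarrow> real" where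
  "Lambda a B Z1 Z2 z3 z4 =
     (1/4) * (norm (diag_conj Z1 + diagB a B z3))\<^sup>2
     - (1/2) * Re (herm_inner (diag_conj Z2 - diagB a B z4) (diag_conj Z1 - diagB a B z3))
     + (1/4) * (norm (diag_conj Z2 - diagB a B z4))\<^sup>2"

definition aXBy :: "complex ^ 'n \<Rightarrow> complex ^ 'n ^ 'n \<Rightarrow> complex ^ 'm ^ 'n \<Rightarrow> complex ^ 'm \<Rightarrow> complex" where
  "aXBy a X B y = (\<Sum>i\<in>UNIV. a $ i * ((X ** B) *v y) $ i)"

end

theory Submission
  imports Defs
begin

lemma norm_sq_vec: "(norm (x :: complex ^ 'n))\<^sup>2 = (\<Sum>i\<in>UNIV. (cmod (x $ i))\<^sup>2)"
  unfolding norm_vec_def L2_set_def by (simp add: sum_nonneg)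

lemma pt_ident:
  fixes p q r :: complex
  shows "1/4 * (cmod (p + q))\<^sup>2 - 1/2 * Re (cnj r * (p - q)) + 1/4 * (cmod r)\<^sup>2
     = Re (cnj p * q) + 1/4 * (cmod (p - q - r))\<^sup>2"
  by (simp only: cmod_power2) (simp add: power2_eq_square algebra_simps)

lemma Lambda_eq:
  "Lambda a B Z1 Z2 z3 z4 = Re (herm_inner (diag_conj Z1) (diagB a B z3))
     + 1/4 * (norm (diag_conj Z1 - diagB a B z3 - (diag_conj Z2 - diagB a B z4)))\<^sup>2"
proof -
  let ?p = "\<lambda>i. diag_conj Z1 $ i" and ?q = "\<lambda>i. diagB a B z3 $ i"
  let ?r = "\<lambda>i. (diag_conj Z2 - diagB a B z4) $ i"
  have "Lambda a B Z1 Z2 z3 z4 = (\<Sum>i\<in>UNIV. 1/4 * (cmod (?p i + ?q i))\<^sup>2 - 1/2 * Re (cnj (?r i) * (?p i - ?q i)) + 1/4 * (cmod (?r i))\<^sup>2)"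
    unfolding Lambda_def norm_sq_vec herm_inner_def
    by (simp only: Re_sum sum_distrib_left sum_subtractf[symmetric] sum.distrib[symmetric]
        vector_add_component vector_minus_component)
  also have "\<dots> = (\<Sum>i\<in>UNIV. Re (cnj (?p i) * ?q i) + 1/4 * (cmod (?p i - ?q i - ?r i))\<^sup>2)"
    by (simp only: pt_ident)
  also have "\<dots> = Re (herm_inner (diag_conj Z1) (diagB a B z3))
     + 1/4 * (norm (diag_conj Z1 - diagB a B z3 - (diag_conj Z2 - diagB a B z4)))\<^sup>2"
    unfolding norm_sq_vec herm_inner_def
    by (simp only: Re_sum sum_distrib_left sum_subtractf[symmetric] sum.distrib[symmetric]
        vector_add_component vector_minus_component)
  finally show ?thesis .
qed

lemma Lambda_ge: "Lambda a B P Q s t \<ge> Re (herm_inner (diag_conj P) (diagB a B s))"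
  unfolding Lambda_eq by simp

lemma aXBy_eq:
  fixes X :: "complex ^ 'n ^ 'n" and B :: "complex ^ 'm ^ 'n"
  assumes "is_diag X"
  shows "aXBy a X B y = herm_inner (diag_conj X) (diagB a B y)"
proof -
  have "(X *v v) $ i = X $ i $ i * v $ i" for v :: "complex ^ 'n" and i
  proof -
    have "(X *v v) $ i = (\<Sum>k\<in>UNIV. X $ i $ k * v $ k)" by (simp add: matrix_vector_mult_def)
    also have "\<dots> = (\<Sum>k\<in>UNIV. if k = i then X $ i $ i * v $ i else 0)"
      using assms unfolding is_diag_def by (intro sum.cong) auto
    finally show ?thesis by simp
  qed
  then show ?thesis
    unfolding aXBy_def herm_inner_def diag_conj_def diagB_def
    by (simp add: matrix_vector_mul_assoc[symmetric] mult.commute mult.left_commute)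
qed

lemma diagB_neg: "diagB a B (- z) = - diagB a B z"
  by (simp add: diagB_def vec_eq_iff matrix_vector_mult_def sum_negf)

lemma diagB_i: "diagB a B (c *s z) = c *s diagB a B z"
  by (simp add: diagB_def vec_eq_iff matrix_vector_mult_def sum_distrib_left mult.left_commute)

lemma herm_neg: "herm_inner u (- v) = - herm_inner u v"
  by (simp add: herm_inner_def sum_negf)

lemma herm_smult: "herm_inner u (c *s v) = c * herm_inner u v"
  by (simp add: herm_inner_def sum_distrib_left mult.left_commute)


lemma herm_lin: "herm_inner c (u *\<^sub>R A + v *\<^sub>R B) = u *\<^sub>R herm_inner c A + v *\<^sub>R herm_inner c B"
  by (simp add: herm_inner_def sum.distrib scaleR_sum_right algebra_simps)

lemma sq_conv:
  fixes A B :: "'a::real_normed_vector" and u v :: real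
  assumes "u \<ge> 0" "v \<ge> 0" "u + v = 1"
  shows "(norm (u *\<^sub>R A + v *\<^sub>R B))\<^sup>2 \<le> u * (norm A)\<^sup>2 + v * (norm B)\<^sup>2"
proof -
  have "norm (u *\<^sub>R A + v *\<^sub>R B) \<le> u * norm A + v * norm B"
    using norm_triangle_ineq[of "u *\<^sub>R A" "v *\<^sub>R B"] assms by simp
  then have "(norm (u *\<^sub>R A + v *\<^sub>R B))\<^sup>2 \<le> (u * norm A + v * norm B)\<^sup>2"
    by (intro power_mono) auto
  also have "\<dots> \<le> u * (norm A)\<^sup>2 + v * (norm B)\<^sup>2"
  proof -
    have "u * (norm A)\<^sup>2 + v * (norm B)\<^sup>2 - (u * norm A + v * norm B)\<^sup>2 = u * v * (norm A - norm B)\<^sup>2"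
    proof -
      have v: "v = 1 - u" using assms(3) by simp
      show ?thesis unfolding v by (simp add: power2_eq_square algebra_simps)
    qed
    moreover have "u * v * (norm A - norm B)\<^sup>2 \<ge> 0" using assms by simp
    ultimately show ?thesis by linarith
  qed
  finally show ?thesis .
qed

lemma convex_quad:
  fixes L M :: "'a::real_vector \<Rightarrow> complex ^ 'n"
  assumes L: "\<And>x y u v. L (u *\<^sub>R x + v *\<^sub>R y) = u *\<^sub>R L x + v *\<^sub>R L y"
    and M: "\<And>x y u v. M (u *\<^sub>R x + v *\<^sub>R y) = u *\<^sub>R M x + v *\<^sub>R M y"
    and S: "convex S"
  shows "convex_on S (\<lambda>p. 1/4 * (norm (L p))\<^sup>2 - 1/2 * Re (herm_inner c (M p)) + k)"
  unfolding convex_on_def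
proof (intro conjI S ballI allI impI)
  fix x y and u v :: real
  assume uv: "u \<ge> 0" "v \<ge> 0" "u + v = 1"
  have q: "(norm (L (u *\<^sub>R x + v *\<^sub>R y)))\<^sup>2 \<le> u * (norm (L x))\<^sup>2 + v * (norm (L y))\<^sup>2"
    unfolding L by (rule sq_conv[OF uv])
  have r: "Re (herm_inner c (M (u *\<^sub>R x + v *\<^sub>R y))) = u * Re (herm_inner c (M x)) + v * Re (herm_inner c (M y))"
    unfolding M herm_lin by simp
  have k: "k = u * k + v * k" using uv(3) by (metis mult_1 distrib_right)
  show "1/4 * (norm (L (u *\<^sub>R x + v *\<^sub>R y)))\<^sup>2 - 1/2 * Re (herm_inner c (M (u *\<^sub>R x + v *\<^sub>R y))) + k
     \<le> u * (1/4 * (norm (L x))\<^sup>2 - 1/2 * Re (herm_inner c (M x)) + k) +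
        v * (1/4 * (norm (L y))\<^sup>2 - 1/2 * Re (herm_inner c (M y)) + k)"
    using q r k by (simp add: algebra_simps)
qed

lemma convex_diag: "convex {p :: (complex ^ 'n ^ 'n) \<times> 'b::real_vector. is_diag (fst p)}"
  unfolding convex_def is_diag_def by simp

lemma diag_conj_lin: "diag_conj (u *\<^sub>R x + v *\<^sub>R y) = u *\<^sub>R diag_conj x + v *\<^sub>R diag_conj y"
  by (simp add: diag_conj_def vec_eq_iff)

lemma diagB_lin: "diagB a B (u *\<^sub>R x + v *\<^sub>R y) = u *\<^sub>R diagB a B x + v *\<^sub>R diagB a B y"
  by (simp add: diagB_def vec_eq_iff matrix_vector_mult_def sum.distrib scaleR_sum_right[symmetric] distrib_left)

lemma conv_gen:
  fixes g :: "complex ^ 'm \<Rightarrow> complex ^ 'm"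
  assumes g: "\<And>x y u v. g (u *\<^sub>R x + v *\<^sub>R y) = u *\<^sub>R g x + v *\<^sub>R g y"
  shows "convex_on {p. is_diag (fst p)} (\<lambda>p. Lambda a B (fst p) X0 (g (snd p)) (g y0))"
  unfolding Lambda_def
  by (rule convex_quad[OF _ _ convex_diag])
     (simp_all add: diag_conj_lin diagB_lin g algebra_simps)

theorem lemma2:
  fixes a :: "complex ^ 'n" and B :: "complex ^ 'm ^ 'n"
    and X0 X :: "complex ^ 'n ^ 'n" and y0 y :: "complex ^ 'm"
    and \<rho> \<kappa> :: real
  assumes "is_diag X0" and "is_diag X"
    and "\<rho> \<ge> Lambda a B X X0 y y0"
    and "\<rho> \<ge> Lambda a B X X0 (- y) (- y0)"
    and "\<kappa> \<ge> Lambda a B X X0 (\<i> *s y) (\<i> *s y0)"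
    and "\<kappa> \<ge> Lambda a B X X0 (- (\<i> *s y)) (- (\<i> *s y0))"
  shows "(cmod (aXBy a X B y))\<^sup>2 \<le> \<rho>\<^sup>2 + \<kappa>\<^sup>2
    \<and> convex_on {p. is_diag (fst p)} (\<lambda>p. Lambda a B (fst p) X0 (snd p) y0)
    \<and> convex_on {p. is_diag (fst p)} (\<lambda>p. Lambda a B (fst p) X0 (- snd p) (- y0))
    \<and> convex_on {p. is_diag (fst p)} (\<lambda>p. Lambda a B (fst p) X0 (\<i> *s snd p) (\<i> *s y0))
    \<and> convex_on {p. is_diag (fst p)} (\<lambda>p. Lambda a B (fst p) X0 (- (\<i> *s snd p)) (- (\<i> *s y0)))"
proof -
  define h where "h = herm_inner (diag_conj X) (diagB a B y)"
  have r1: "\<rho> \<ge> Re h" using assms(3) Lambda_ge[where a=a and B=B and P=X and Q=X0 and s=y and t=y0] h_def by simp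
  have r2: "\<rho> \<ge> - Re h" using assms(4) Lambda_ge[where a=a and B=B and P=X and Q=X0 and s="-y" and t="-y0"] h_def
    by (simp add: diagB_neg herm_neg)
  have k1: "\<kappa> \<ge> - Im h" using assms(5) Lambda_ge[where a=a and B=B and P=X and Q=X0 and s="\<i> *s y" and t="\<i> *s y0"] h_def
    by (simp add: diagB_i herm_smult)
  have k2: "\<kappa> \<ge> Im h" using assms(6) Lambda_ge[where a=a and B=B and P=X and Q=X0 and s="-(\<i> *s y)" and t="-(\<i> *s y0)"] h_def
    by (simp add: diagB_i herm_smult diagB_neg herm_neg)
  have "(Re h)\<^sup>2 \<le> \<rho>\<^sup>2" using r1 r2 by (simp add: abs_le_square_iff[symmetric] abs_le_iff)
  moreover have "(Im h)\<^sup>2 \<le> \<kappa>\<^sup>2" using k1 k2 by (simp add: abs_le_square_iff[symmetric] abs_le_iff)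
  moreover have "aXBy a X B y = h" using aXBy_eq[OF assms(2)] h_def by simp
  ultimately have ineq: "(cmod (aXBy a X B y))\<^sup>2 \<le> \<rho>\<^sup>2 + \<kappa>\<^sup>2"
    by (simp add: cmod_power2)
  have g1: "\<And>x y u v. - (u *\<^sub>R x + v *\<^sub>R y) = u *\<^sub>R (- x) + v *\<^sub>R (- (y :: complex ^ 'm))" by simp
  have g2: "\<And>x y u v. \<i> *s (u *\<^sub>R x + v *\<^sub>R y) = u *\<^sub>R (\<i> *s x) + v *\<^sub>R (\<i> *s (y :: complex ^ 'm))"
    by (simp add: vec_eq_iff algebra_simps)
  have g3: "\<And>x y u v. - (\<i> *s (u *\<^sub>R x + v *\<^sub>R y)) = u *\<^sub>R (- (\<i> *s x)) + v *\<^sub>R (- (\<i> *s (y :: complex ^ 'm)))"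
    by (simp add: vec_eq_iff algebra_simps)
  show ?thesis
    using ineq conv_gen[where g="\<lambda>z. z", of a B X0 y0] conv_gen[OF g1, of a B X0 y0]
      conv_gen[OF g2, of a B X0 y0] conv_gen[OF g3, of a B X0 y0] by simp

qed

end
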